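(* Let $X$ be a compact metric space, $f:X\to X$ a continuous minimal map, $H$ the homeo-part of $f$, and $P$ a residual subset of $X$. Then there is a set $R\subseteq X$ such that (1) $R\subseteq P\cap H$ and $R$ is residual in $X$; (2) $f(R)=R=f^{-1}(R)$; (3) both $f|_R$ and $(f|_R)^{-1}$ are minimal homeomorphisms $R\to R$.
   Context: Minimal: every forward orbit dense (for the compact space $X$, equivalently no proper nonempty closed invariant subset); for the (possibly non-compact) $R$, minimality of a map means every forward orbit is dense in $R$. Homeo-part of $f$: the set $H$ of all $x_0\in X$ whose full orbit $\{x\in X:\exists i,j\ge0,\ f^i(x)=f^j(x_0)\}$ has the form $\{\dots,x_{-1},x_0,x_1,\dots\}$ with $f(x_n)=x_{n+1}$ for all integers $n$. Residual: complement of a countable union of nowhere dense sets. *)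

theory Defs
  imports "HOL-Analysis.Analysis"
begin

definition nowhere_dense_in :: "'a::topological_space set \<Rightarrow> 'a set \<Rightarrow> bool" where
  "nowhere_dense_in X A \<longleftrightarrow> A \<subseteq> X \<and>
     (top_of_set X) interior_of ((top_of_set X) closure_of A) = {}"

definition residual_in :: "'a::topological_space set \<Rightarrow> 'a set \<Rightarrow> bool" where
  "residual_in X A \<longleftrightarrow> (\<exists>\<F>. countable \<F> \<and> (\<forall>N\<in>\<F>. nowhere_dense_in X N) \<and> A = X - \<Union>\<F>)"

definition minimal_on :: "'a::topological_space set \<Rightarrow> ('a \<Rightarrow> 'a) \<Rightarrow> bool" where
  "minimal_on S g \<longleftrightarrow> g ` S \<subseteq> S \<and>
     (\<forall>x\<in>S. (top_of_set S) closure_of {(g ^^ n) x | n. True} = S)"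

definition full_orbit :: "'a set \<Rightarrow> ('a \<Rightarrow> 'a) \<Rightarrow> 'a \<Rightarrow> 'a set" where
  "full_orbit X f x0 = {x\<in>X. \<exists>i j. (f ^^ i) x = (f ^^ j) x0}"

definition homeo_part :: "'a set \<Rightarrow> ('a \<Rightarrow> 'a) \<Rightarrow> 'a set" where
  "homeo_part X f = {x0\<in>X. \<exists>x :: int \<Rightarrow> 'a. x 0 = x0 \<and> (\<forall>n. f (x n) = x (n + 1)) \<and>
       full_orbit X f x0 = range x}"

end

theory Submission
  imports Defs
begin


lemma clo_sub: "S \<subseteq> X \<Longrightarrow> top_of_set X closure_of S = X \<inter> closure S"
  by (simp add: closure_of_subtopology Int_absorb1)

lemma nd_char:
  "nowhere_dense_in X A \<longleftrightarrow> A \<subseteq> X \<and> (\<forall>U. openin (top_of_set X) U \<and> U \<noteq> {} \<longrightarrow>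
      (\<exists>V. openin (top_of_set X) V \<and> V \<noteq> {} \<and> V \<subseteq> U \<and> V \<inter> A = {}))"
proof -
  let ?T = "top_of_set X"
  have eqn: "?T interior_of (?T closure_of A) = {} \<longleftrightarrow> (\<forall>U. openin ?T U \<and> U \<noteq> {} \<longrightarrow>
      (\<exists>V. openin ?T V \<and> V \<noteq> {} \<and> V \<subseteq> U \<and> V \<inter> A = {}))" if AX: "A \<subseteq> X"
  proof
    assume H: "?T interior_of (?T closure_of A) = {}"
    show "\<forall>U. openin ?T U \<and> U \<noteq> {} \<longrightarrow> (\<exists>V. openin ?T V \<and> V \<noteq> {} \<and> V \<subseteq> U \<and> V \<inter> A = {})"
    proof (intro allI impI)
      fix U assume U: "openin ?T U \<and> U \<noteq> {}"
      define V where "V = U - ?T closure_of A"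
      have o: "openin ?T V" unfolding V_def
        by (rule openin_diff) (use U in simp_all)
      have "V \<noteq> {}"
      proof
        assume "V = {}"
        then have "U \<subseteq> ?T closure_of A" unfolding V_def by blast
        then have "U \<subseteq> ?T interior_of (?T closure_of A)"
          using U by (intro interior_of_maximal) simp_all
        then show False using H U by simp
      qed
      moreover have "A \<subseteq> ?T closure_of A" using AX by (intro closure_of_subset) simp
      then have "V \<inter> A = {}" unfolding V_def by blast
      moreover have "V \<subseteq> U" unfolding V_def by blast
      ultimately show "\<exists>V. openin ?T V \<and> V \<noteq> {} \<and> V \<subseteq> U \<and> V \<inter> A = {}"
        using o by blast
    qed
  next
    assume H: "\<forall>U. openin ?T U \<and> U \<noteq> {} \<longrightarrow> (\<exists>V. openin ?T V \<and> V \<noteq> {} \<and> V \<subseteq> U \<and> V \<inter> A = {})"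
    show "?T interior_of (?T closure_of A) = {}"
    proof (rule ccontr)
      let ?U = "?T interior_of (?T closure_of A)"
      assume ne: "?U \<noteq> {}"
      have "openin ?T ?U" by (rule openin_interior_of)
      with ne H obtain V where V: "openin ?T V" "V \<noteq> {}" "V \<subseteq> ?U" "V \<inter> A = {}"
        by meson
      then obtain v where v: "v \<in> V" by auto
      have "?U \<subseteq> ?T closure_of A" by (rule interior_of_subset)
      then have "v \<in> ?T closure_of A" using V(3) v by blast
      then have "\<exists>y. y \<in> A \<and> y \<in> V" using V(1) v unfolding in_closure_of by blast
      then show False using V(4) by blast
    qed
  qed
  show ?thesis
  proof (cases "A \<subseteq> X")
    case True
    show ?thesis unfolding nowhere_dense_in_def using eqn[OF True] True by simp
  next
    case False
    then show ?thesis unfolding nowhere_dense_in_def by simp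
  qed
qed

lemma nd_subset:
  assumes "nowhere_dense_in X N" "M \<subseteq> N" shows "nowhere_dense_in X M"
  unfolding nd_char
proof (intro conjI allI impI)
  have N: "N \<subseteq> X" "\<And>U. openin (top_of_set X) U \<and> U \<noteq> {} \<Longrightarrow>
      (\<exists>V. openin (top_of_set X) V \<and> V \<noteq> {} \<and> V \<subseteq> U \<and> V \<inter> N = {})"
    using assms(1) unfolding nd_char by auto
  show "M \<subseteq> X" using N(1) assms(2) by (rule order_trans[rotated])
  fix U assume "openin (top_of_set X) U \<and> U \<noteq> {}"
  then obtain V where "openin (top_of_set X) V" "V \<noteq> {}" "V \<subseteq> U" "V \<inter> N = {}"
    using N(2) by blast
  moreover have "V \<inter> M = {}" using \<open>V \<inter> N = {}\<close> assms(2) by blast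
  ultimately show "\<exists>V. openin (top_of_set X) V \<and> V \<noteq> {} \<and> V \<subseteq> U \<and> V \<inter> M = {}" by blast
qed

lemma res_super:
  assumes "residual_in X A" "A \<subseteq> B" "B \<subseteq> X"
  shows "residual_in X B"
proof -
  obtain F where F: "countable F" "\<forall>N\<in>F. nowhere_dense_in X N" "A = X - \<Union>F"
    using assms(1) unfolding residual_in_def by blast
  have "B = X - \<Union>((\<lambda>N. N - B) ` F)" using F assms by auto
  moreover have "\<forall>N\<in>(\<lambda>N. N - B) ` F. nowhere_dense_in X N" using F nd_subset by blast
  ultimately show ?thesis unfolding residual_in_def using F by blast
qed

lemma res_Int:
  assumes "countable I" "I \<noteq> {}" "\<And>i. i \<in> I \<Longrightarrow> residual_in X (A i)"
  shows "residual_in X (\<Inter>i\<in>I. A i)"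
proof -
  have "\<forall>i\<in>I. \<exists>F. countable F \<and> (\<forall>N\<in>F. nowhere_dense_in X N) \<and> A i = X - \<Union>F"
    using assms(3) unfolding residual_in_def by blast
  then have "\<exists>F. \<forall>i\<in>I. countable (F i) \<and> (\<forall>N\<in>F i. nowhere_dense_in X N) \<and> A i = X - \<Union>(F i)"
    by (rule bchoice)
  then obtain F where F: "\<forall>i\<in>I. countable (F i) \<and> (\<forall>N\<in>F i. nowhere_dense_in X N) \<and> A i = X - \<Union>(F i)"
    by (elim exE)
  have eqA: "\<And>i. i \<in> I \<Longrightarrow> A i = X - \<Union>(F i)" using F by blast
  have "(\<Inter>i\<in>I. A i) = (\<Inter>i\<in>I. X - \<Union>(F i))" by (rule INF_cong[OF refl eqA])
  also have "\<dots> = X - \<Union>(\<Union>i\<in>I. F i)" using assms(2) by blast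
  finally have eq: "(\<Inter>i\<in>I. A i) = X - \<Union>(\<Union>i\<in>I. F i)" .
  have c: "countable (\<Union>i\<in>I. F i)"
    by (rule countable_UN[OF assms(1)]) (use F in blast)
  have n: "\<forall>N\<in>(\<Union>i\<in>I. F i). nowhere_dense_in X N" using F by blast
  show ?thesis unfolding residual_in_def by (rule exI[of _ "\<Union>i\<in>I. F i"]) (use eq c n in blast)
qed

lemma res_pre:
  assumes "residual_in X A" "h ` X \<subseteq> X"
    "\<And>N. nowhere_dense_in X N \<Longrightarrow> nowhere_dense_in X {x\<in>X. h x \<in> N}"
  shows "residual_in X {x\<in>X. h x \<in> A}"
proof -
  obtain F where F: "countable F" "\<forall>N\<in>F. nowhere_dense_in X N" "A = X - \<Union>F"
    using assms(1) unfolding residual_in_def by blast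
  define G where "G = (\<lambda>N. {x\<in>X. h x \<in> N}) ` F"
  have hX: "\<And>x. x \<in> X \<Longrightarrow> h x \<in> X" using assms(2) by blast
  have eq: "{x\<in>X. h x \<in> A} = X - \<Union>G"
  proof (rule set_eqI)
    fix x
    show "x \<in> {x\<in>X. h x \<in> A} \<longleftrightarrow> x \<in> X - \<Union>G"
      unfolding G_def F(3) using hX[of x] by auto
  qed
  have c: "countable G" unfolding G_def using F(1) by (rule countable_image)
  have n: "\<forall>M\<in>G. nowhere_dense_in X M"
  proof
    fix M assume "M \<in> G"
    then obtain N where "N \<in> F" "M = {x\<in>X. h x \<in> N}" unfolding G_def by blast
    then show "nowhere_dense_in X M" using F(2) assms(3) by simp
  qed
  show ?thesis unfolding residual_in_def using eq c n by blast
qed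

lemma res_img:
  assumes "residual_in X A"
    "\<And>N. nowhere_dense_in X N \<Longrightarrow> nowhere_dense_in X (h ` N)"
  shows "residual_in X (X - h ` (X - A))"
proof -
  obtain F where F: "countable F" "\<forall>N\<in>F. nowhere_dense_in X N" "A = X - \<Union>F"
    using assms(1) unfolding residual_in_def by blast
  have sub: "\<forall>N\<in>F. N \<subseteq> X" using F(2) unfolding nowhere_dense_in_def by blast
  have "X - A = \<Union>F" unfolding F(3) using sub by blast
  then have "X - h ` (X - A) = X - \<Union>((\<lambda>N. h ` N) ` F)" by (simp add: image_Union)
  moreover have "countable ((\<lambda>N. h ` N) ` F)" using F(1) by blast
  moreover have "\<forall>M\<in>(\<lambda>N. h ` N) ` F. nowhere_dense_in X M"
    using F(2) assms(2) by blast
  ultimately show ?thesis unfolding residual_in_def by blast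
qed

lemma nest_nonempty:
  assumes "compact S" "\<And>n. closed (T n)" "\<And>n. T n \<subseteq> S" "\<And>n. T n \<noteq> {}"
    "\<And>n. T (Suc n) \<subseteq> T n"
  shows "\<Inter>(range T) \<noteq> {}"
proof -
  have mono: "m \<le> n \<Longrightarrow> T n \<subseteq> T m" for m n
  proof (induction n rule: dec_induct)
    case (step n) then show ?case using assms(5)[of n] by blast
  qed simp
  have "S \<inter> \<Inter>(range T) \<noteq> {}"
  proof (rule compact_imp_fip[OF assms(1)])
    show "\<And>U. U \<in> range T \<Longrightarrow> closed U" using assms(2) by blast
    fix F' assume "finite F'" "F' \<subseteq> range T"
    then obtain I where I: "finite I" "F' = T ` I" by (meson finite_subset_image)
    define m where "m = (if I = {} then 0 else Max I)"
    have "T m \<subseteq> T i" if "i \<in> I" for i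
      using that I(1) mono unfolding m_def by (simp add: Max_ge split: if_splits; blast)
    then have "T m \<subseteq> S \<inter> \<Inter>F'" using I assms(3) by blast
    then show "S \<inter> \<Inter>F' \<noteq> {}" using assms(4) by blast
  qed
  then show ?thesis by blast
qed




locale mini =
  fixes X :: "'a::metric_space set" and f :: "'a \<Rightarrow> 'a"
  assumes cpt: "compact X" and cont: "continuous_on X f" and fX: "f ` X \<subseteq> X"
    and mini: "minimal_on X f" and ne: "X \<noteq> {}"
begin

lemma closedX: "closed X" using cpt by (rule compact_imp_closed)

lemma fin: "x \<in> X \<Longrightarrow> f x \<in> X" using fX by blast

lemma fpow_in: "x \<in> X \<Longrightarrow> (f ^^ n) x \<in> X"
  by (induction n) (simp_all add: fin)

lemma cont_pow: "continuous_on X (f ^^ n)"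
proof (induction n)
  case 0 then show ?case by (simp add: continuous_on_id)
next
  case (Suc n)
  have "continuous_on ((f ^^ n) ` X) f"
    by (rule continuous_on_subset[OF cont]) (use fpow_in in blast)
  then have "continuous_on X (f \<circ> (f ^^ n))"
    by (rule continuous_on_compose[OF Suc.IH])
  then show ?case by simp
qed

lemma orbit_dense: "x \<in> X \<Longrightarrow> X \<subseteq> closure {(f ^^ n) x | n. True}"
proof -
  assume x: "x \<in> X"
  have sub: "{(f ^^ n) x | n. True} \<subseteq> X" using fpow_in x by blast
  have "top_of_set X closure_of {(f ^^ n) x | n. True} = X"
    using mini x unfolding minimal_on_def by blast
  then show ?thesis using clo_sub[OF sub] by blast
qed

lemma surj: "f ` X = X"
proof
  show "f ` X \<subseteq> X" by (rule fX)
  obtain x where x: "x \<in> X" using ne by blast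
  have cl: "closed (f ` X)" by (intro compact_imp_closed compact_continuous_image cont cpt)
  have "{(f ^^ n) (f x) | n. True} \<subseteq> f ` X"
  proof
    fix y assume "y \<in> {(f ^^ n) (f x) | n. True}"
    then obtain n where "y = (f ^^ n) (f x)" by blast
    then have "y = f ((f ^^ n) x)" by (simp add: funpow_swap1)
    then show "y \<in> f ` X" using fpow_in x by blast
  qed
  then have "closure {(f ^^ n) (f x) | n. True} \<subseteq> f ` X" using cl by (rule closure_minimal)
  then show "X \<subseteq> f ` X" using orbit_dense[OF fin[OF x]] by (rule order_trans[rotated])
qed

lemma openin_compl: "closed C \<Longrightarrow> openin (top_of_set X) (X - C)"
  unfolding openin_open by (rule exI[of _ "- C"]) (auto simp: open_Compl)

lemma closed_compl: "openin (top_of_set X) U \<Longrightarrow> closed (X - U)"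
proof -
  assume "openin (top_of_set X) U"
  then obtain T where T: "open T" "U = X \<inter> T" unfolding openin_open by blast
  then have "X - U = X \<inter> (- T)" by blast
  then show ?thesis using T closedX by (simp add: closed_Int open_closed)
qed

lemma lemA:
  assumes U: "openin (top_of_set X) U" "U \<noteq> {}"
  shows "f ` (X - U) \<noteq> X"
proof
  assume eq: "f ` (X - U) = X"
  define K where "K = X - U"
  have clK: "closed K" unfolding K_def by (rule closed_compl[OF U(1)])
  define T where "T n = {x\<in>X. \<forall>i<n. (f ^^ i) x \<in> K}" for n
  have ex: "\<forall>y\<in>X. \<exists>x\<in>T n. (f ^^ n) x = y" for n
  proof (induction n)
    case 0 then show ?case unfolding T_def by simp
  next
    case (Suc n)
    show ?case
    proof
      fix y assume y: "y \<in> X"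
      then obtain z where z: "z \<in> K" "f z = y" using eq unfolding K_def by (metis imageE)
      have "z \<in> X" using z(1) unfolding K_def by blast
      then obtain x where x: "x \<in> T n" "(f ^^ n) x = z" using Suc.IH by blast
      have "(f ^^ Suc n) x = y" using x z by simp
      moreover have "x \<in> T (Suc n)"
        using x z unfolding T_def by (auto simp: less_Suc_eq)
      ultimately show "\<exists>x\<in>T (Suc n). (f ^^ Suc n) x = y" by blast
    qed
  qed
  have Tsub: "T n \<subseteq> X" for n unfolding T_def by blast
  have Tne: "T n \<noteq> {}" for n using ex[of n] ne by blast
  have Tdec: "T (Suc n) \<subseteq> T n" for n unfolding T_def by auto
  have Tcl: "closed (T n)" for n
  proof -
    have "T n = X \<inter> (\<Inter>i\<in>{..<n}. X \<inter> (f ^^ i) -` K)" unfolding T_def by auto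
    moreover have "closed (X \<inter> (f ^^ i) -` K)" for i
      by (rule continuous_closed_preimage[OF cont_pow closedX clK])
    then have "closed (\<Inter>i\<in>{..<n}. X \<inter> (f ^^ i) -` K)" by (intro closed_INT) blast
    ultimately show ?thesis using closedX by (metis closed_Int)
  qed
  obtain x where x: "x \<in> \<Inter>(range T)"
    using nest_nonempty[of X T, OF cpt Tcl Tsub Tne Tdec] by blast
  have xX: "x \<in> X" using x Tsub by blast
  have "(f ^^ i) x \<in> K" for i using x unfolding T_def by blast
  then have "{(f ^^ n) x | n. True} \<subseteq> K" by blast
  then have "closure {(f ^^ n) x | n. True} \<subseteq> K" using clK by (rule closure_minimal)
  then have "X \<subseteq> K" using orbit_dense[OF xX] by (rule order_trans[rotated])
  moreover have "U \<subseteq> X" using openin_subset[OF U(1)] by simp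
  ultimately show False using U(2) unfolding K_def by blast
qed

definition Op where "Op U = X - f ` (X - U)"

lemma lemO:
  assumes U: "openin (top_of_set X) U" "U \<noteq> {}"
  shows "openin (top_of_set X) (Op U)" "Op U \<noteq> {}" "Op U \<subseteq> f ` U"
    "\<And>y x. y \<in> Op U \<Longrightarrow> x \<in> X \<Longrightarrow> f x = y \<Longrightarrow> x \<in> U"
proof -
  have "compact (X \<inter> (X - U))" by (rule compact_Int_closed[OF cpt closed_compl[OF U(1)]])
  then have cK: "compact (X - U)" by (simp add: Int_absorb1)
  have "continuous_on (X - U) f" by (rule continuous_on_subset[OF cont]) blast
  then have "compact (f ` (X - U))" using cK by (rule compact_continuous_image)
  then show "openin (top_of_set X) (Op U)" unfolding Op_def
    by (intro openin_compl compact_imp_closed)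
  have "f ` (X - U) \<subseteq> X" using fX by blast
  then show "Op U \<noteq> {}" using lemA[OF U] unfolding Op_def by blast
  show *: "\<And>y x. y \<in> Op U \<Longrightarrow> x \<in> X \<Longrightarrow> f x = y \<Longrightarrow> x \<in> U"
    unfolding Op_def by blast
  show "Op U \<subseteq> f ` U"
  proof
    fix y assume y: "y \<in> Op U"
    then have "y \<in> f ` X" using surj unfolding Op_def by blast
    then obtain x where "x \<in> X" "f x = y" by blast
    then show "y \<in> f ` U" using *[OF y] by blast
  qed
qed

lemma openin_pre: "openin (top_of_set X) W \<Longrightarrow> openin (top_of_set X) (X \<inter> f -` W)"
proof -
  assume W: "openin (top_of_set X) W"
  have "f \<in> X \<rightarrow> X" using fX by (simp add: image_subset_iff_funcset)
  then show ?thesis by (rule continuous_openin_preimage[OF cont _ W])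
qed

lemma nd_pre:
  assumes N: "nowhere_dense_in X N"
  shows "nowhere_dense_in X {x\<in>X. f x \<in> N}"
  unfolding nd_char
proof (intro conjI allI impI)
  show "{x\<in>X. f x \<in> N} \<subseteq> X" by blast
  fix U assume U: "openin (top_of_set X) U \<and> U \<noteq> {}"
  note o = lemO[OF conjunct1[OF U] conjunct2[OF U]]
  obtain W where W: "openin (top_of_set X) W" "W \<noteq> {}" "W \<subseteq> Op U" "W \<inter> N = {}"
    using N o(1,2) unfolding nd_char by blast
  define V where "V = X \<inter> f -` W"
  have "openin (top_of_set X) V" unfolding V_def by (rule openin_pre[OF W(1)])
  moreover have "V \<noteq> {}"
  proof -
    obtain w where "w \<in> W" using W(2) by blast
    then have "w \<in> f ` U" using W(3) o(3) by blast
    then obtain u where "u \<in> U" "f u = w" by blast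
    moreover have "U \<subseteq> X" using openin_subset U by fastforce
    ultimately show ?thesis unfolding V_def using \<open>w \<in> W\<close> by blast
  qed
  moreover have "V \<subseteq> U" unfolding V_def using W(3) o(4) by blast
  moreover have "V \<inter> {x\<in>X. f x \<in> N} = {}" unfolding V_def using W(4) by blast
  ultimately show "\<exists>V. openin (top_of_set X) V \<and> V \<noteq> {} \<and> V \<subseteq> U \<and> V \<inter> {x\<in>X. f x \<in> N} = {}"
    by blast
qed

lemma nd_img:
  assumes N: "nowhere_dense_in X N"
  shows "nowhere_dense_in X (f ` N)"
  unfolding nd_char
proof (intro conjI allI impI)
  have NX: "N \<subseteq> X" using N unfolding nowhere_dense_in_def by blast
  then show "f ` N \<subseteq> X" using fX by blast
  fix U assume U: "openin (top_of_set X) U \<and> U \<noteq> {}"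
  have UX: "U \<subseteq> X" using openin_subset U by fastforce
  define U' where "U' = X \<inter> f -` U"
  have oU': "openin (top_of_set X) U'" unfolding U'_def by (rule openin_pre) (use U in blast)
  have "U' \<noteq> {}"
  proof -
    obtain u where "u \<in> U" using U by blast
    then have "u \<in> f ` X" using UX surj by blast
    then show ?thesis unfolding U'_def using \<open>u \<in> U\<close> by blast
  qed
  then obtain W where W: "openin (top_of_set X) W" "W \<noteq> {}" "W \<subseteq> U'" "W \<inter> N = {}"
    using N oU' unfolding nd_char by blast
  note o = lemO[OF W(1) W(2)]
  have "Op W \<subseteq> U" using o(3) W(3) unfolding U'_def by blast
  moreover have "Op W \<inter> f ` N = {}"
  proof -
    have False if "y \<in> Op W" "c \<in> N" "f c = y" for y c
      using o(4)[OF that(1) _ that(3)] that(2) NX W(4) by blast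
    then show ?thesis by blast
  qed
  ultimately show "\<exists>V. openin (top_of_set X) V \<and> V \<noteq> {} \<and> V \<subseteq> U \<and> V \<inter> f ` N = {}"
    using o(1,2) by blast
qed

definition Deps where
  "Deps e = {y\<in>X. \<exists>x\<in>X. \<exists>x'\<in>X. f x = y \<and> f x' = y \<and> e \<le> dist x x'}"

lemma nd_D:
  assumes e: "e > 0" shows "nowhere_dense_in X (Deps e)"
  unfolding nd_char
proof (intro conjI allI impI)
  show "Deps e \<subseteq> X" unfolding Deps_def by blast
  fix U assume U: "openin (top_of_set X) U \<and> U \<noteq> {}"
  have UX: "U \<subseteq> X" using openin_subset U by fastforce
  obtain u where u: "u \<in> U" using U by blast
  then have "u \<in> f ` X" using UX surj by blast
  then obtain x0 where x0: "x0 \<in> X" "f x0 = u" by blast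
  define U' where "U' = (X \<inter> f -` U) \<inter> (X \<inter> ball x0 (e/2))"
  have oU': "openin (top_of_set X) U'" unfolding U'_def
  proof (rule openin_Int)
    show "openin (top_of_set X) (X \<inter> f -` U)" by (rule openin_pre) (use U in blast)
    show "openin (top_of_set X) (X \<inter> ball x0 (e/2))" by (rule openin_open_Int) simp
  qed
  have "x0 \<in> U'" unfolding U'_def using x0 u e by simp
  then have ne': "U' \<noteq> {}" by blast
  note o = lemO[OF oU' ne']
  have "Op U' \<subseteq> U" using o(3) unfolding U'_def by blast
  moreover have "Op U' \<inter> Deps e = {}"
  proof -
    have False if "y \<in> Op U'" "x \<in> X" "x' \<in> X" "f x = y" "f x' = y" "e \<le> dist x x'" for y x x'
    proof -
      have "x \<in> ball x0 (e/2)" "x' \<in> ball x0 (e/2)"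
        using o(4)[OF that(1) that(2) that(4)] o(4)[OF that(1) that(3) that(5)]
        unfolding U'_def by blast+
      then have "dist x x' < e" unfolding mem_ball
        by (metis dist_commute dist_triangle_half_l)
      then show False using that(6) by simp
    qed
    then show ?thesis unfolding Deps_def by blast
  qed
  ultimately show "\<exists>V. openin (top_of_set X) V \<and> V \<noteq> {} \<and> V \<subseteq> U \<and> V \<inter> Deps e = {}"
    using o(1,2) by blast
qed

end

lemma res_Int2:
  assumes "residual_in X A" "residual_in X B" shows "residual_in X (A \<inter> B)"
proof -
  obtain F where F: "countable F" "\<forall>N\<in>F. nowhere_dense_in X N" "A = X - \<Union>F"
    using assms(1) unfolding residual_in_def by blast
  obtain G where G: "countable G" "\<forall>N\<in>G. nowhere_dense_in X N" "B = X - \<Union>G"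
    using assms(2) unfolding residual_in_def by blast
  have "A \<inter> B = X - \<Union>(F \<union> G)" using F(3) G(3) by blast
  moreover have "countable (F \<union> G)" using F(1) G(1) by blast
  moreover have "\<forall>N\<in>F \<union> G. nowhere_dense_in X N" using F(2) G(2) by blast
  ultimately show ?thesis unfolding residual_in_def by blast
qed

context mini
begin

definition Dset where "Dset = X - \<Union>(range (\<lambda>m. Deps (inverse (real (Suc m)))))"

lemma D_res: "residual_in X Dset"
  unfolding residual_in_def Dset_def
proof (intro exI conjI)
  show "countable (range (\<lambda>m. Deps (inverse (real (Suc m)))))" by blast
  show "\<forall>N\<in>range (\<lambda>m. Deps (inverse (real (Suc m)))). nowhere_dense_in X N"
    using nd_D by simp
qed (rule refl)

lemma D_uniq:
  assumes "y \<in> Dset" "x \<in> X" "x' \<in> X" "f x = y" "f x' = y" shows "x = x'"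
proof (rule ccontr)
  assume "x \<noteq> x'"
  then have "0 < dist x x'" by simp
  then obtain m where m: "inverse (real (Suc m)) < dist x x'" using reals_Archimedean by blast
  have "y \<in> X" using assms(2,4) fin by blast
  then have "y \<in> Deps (inverse (real (Suc m)))" unfolding Deps_def
    using assms(2-5) m by (intro CollectI conjI bexI[of _ x] bexI[of _ x']) simp_all
  then show False using assms(1) unfolding Dset_def by blast
qed

lemma nd_pre_pow: "nowhere_dense_in X N \<Longrightarrow> nowhere_dense_in X {x\<in>X. (f ^^ n) x \<in> N}"
proof (induction n arbitrary: N)
  case 0
  then have "N \<subseteq> X" unfolding nowhere_dense_in_def by blast
  then have "{x\<in>X. (f ^^ 0) x \<in> N} = N" by auto
  then show ?case using 0 by simp
next
  case (Suc n)
  have "{x\<in>X. (f ^^ Suc n) x \<in> N} = {x\<in>X. (f ^^ n) x \<in> {y\<in>X. f y \<in> N}}"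
    using fpow_in by auto
  then show ?case using Suc.IH[OF nd_pre[OF Suc.prems]] by simp
qed

lemma nd_img_pow: "nowhere_dense_in X N \<Longrightarrow> nowhere_dense_in X ((f ^^ n) ` N)"
proof (induction n)
  case 0 then show ?case by simp
next
  case (Suc n)
  have "(f ^^ Suc n) ` N = f ` ((f ^^ n) ` N)" by (simp add: image_comp)
  then show ?case using nd_img[OF Suc.IH[OF Suc.prems]] by simp
qed

lemma fpow_img: "(f ^^ n) ` X \<subseteq> X" using fpow_in by blast

lemma fpow_swap: "(f ^^ j) (f x) = (f ^^ Suc j) x"
  by (simp only: funpow_Suc_right comp_def)

end

locale mini2 = mini +
  fixes P assumes PX: "P \<subseteq> X" and Pres: "residual_in X P"
begin

definition Q where "Q = P \<inter> Dset"
definition R where "R = {x\<in>X. \<forall>z\<in>X. \<forall>i j. (f ^^ i) z = (f ^^ j) x \<longrightarrow> z \<in> Q}"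

lemma QX: "Q \<subseteq> X" unfolding Q_def using PX by blast

lemma R_res: "residual_in X R"
proof -
  have Qr: "residual_in X Q" unfolding Q_def by (rule res_Int2[OF Pres D_res])
  define S where "S i j = {x\<in>X. (f ^^ j) x \<in> X - (f ^^ i) ` (X - Q)}" for i j
  have Sr: "residual_in X (S i j)" for i j
    unfolding S_def
    by (rule res_pre[OF res_img[OF Qr nd_img_pow] fpow_img nd_pre_pow])
  have "R = (\<Inter>p\<in>UNIV. S (fst p) (snd p))"
  proof
    show "R \<subseteq> (\<Inter>p\<in>UNIV. S (fst p) (snd p))"
    proof
      fix x assume x: "x \<in> R"
      have "x \<in> S i j" for i j
      proof -
        have xX: "x \<in> X" using x unfolding R_def by blast
        have "(f ^^ j) x \<notin> (f ^^ i) ` (X - Q)"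
        proof
          assume "(f ^^ j) x \<in> (f ^^ i) ` (X - Q)"
          then obtain z where z: "z \<in> X - Q" "(f ^^ j) x = (f ^^ i) z" by (rule imageE)
          have H: "\<forall>z\<in>X. \<forall>i j. (f ^^ i) z = (f ^^ j) x \<longrightarrow> z \<in> Q"
            using x unfolding R_def by blast
          have "z \<in> Q" using H z by (metis DiffD1)
          then show False using z(1) by blast
        qed
        then show ?thesis unfolding S_def using xX fpow_in by blast
      qed
      then show "x \<in> (\<Inter>p\<in>UNIV. S (fst p) (snd p))" by blast
    qed
    show "(\<Inter>p\<in>UNIV. S (fst p) (snd p)) \<subseteq> R"
    proof
      fix x assume x: "x \<in> (\<Inter>p\<in>UNIV. S (fst p) (snd p))"
      then have xS: "x \<in> S i j" for i j by (metis (no_types) INT_E UNIV_I fst_conv snd_conv)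
      have xX: "x \<in> X" using xS[of 0 0] unfolding S_def by blast
      have "z \<in> Q" if "z \<in> X" "(f ^^ i) z = (f ^^ j) x" for z i j
      proof (rule ccontr)
        assume "z \<notin> Q"
        then have "(f ^^ j) x \<in> (f ^^ i) ` (X - Q)" using that by (metis DiffI imageI)
        then show False using xS[of i j] unfolding S_def by blast
      qed
      then show "x \<in> R" unfolding R_def using xX by blast
    qed
  qed
  then show ?thesis using res_Int[of "UNIV :: (nat \<times> nat) set" X "\<lambda>p. S (fst p) (snd p)"] Sr
    by simp
qed

lemma RX: "R \<subseteq> X" unfolding R_def by blast

lemma RQ: "R \<subseteq> Q"
proof
  fix x assume "x \<in> R"
  then show "x \<in> Q" unfolding R_def by (metis (mono_tags, lifting) CollectD funpow_0)
qed

lemma R_fwd: "x \<in> R \<Longrightarrow> f x \<in> R"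
proof -
  assume x: "x \<in> R"
  have "z \<in> Q" if "z \<in> X" "(f ^^ i) z = (f ^^ j) (f x)" for z i j
    using x that(1) that(2)[unfolded fpow_swap] unfolding R_def by blast
  moreover have "f x \<in> X" using x RX fin by blast
  ultimately show "f x \<in> R" unfolding R_def by blast
qed

lemma R_bwd: "x \<in> X \<Longrightarrow> f x \<in> R \<Longrightarrow> x \<in> R"
proof -
  assume x: "x \<in> X" "f x \<in> R"
  have "z \<in> Q" if "z \<in> X" "(f ^^ i) z = (f ^^ j) x" for z i j
  proof -
    have "(f ^^ Suc i) z = (f ^^ j) (f x)" using that(2) by (simp add: fpow_swap)
    then show ?thesis using x(2) that(1) unfolding R_def by blast
  qed
  then show "x \<in> R" unfolding R_def using x(1) by blast
qed

lemma R_pre: "R = {x\<in>X. f x \<in> R}"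
  using R_fwd R_bwd RX by blast

lemma R_fwd_pow: "x \<in> R \<Longrightarrow> (f ^^ n) x \<in> R"
  by (induction n) (simp_all add: R_fwd)

lemma R_bwd_pow: "w \<in> X \<Longrightarrow> (f ^^ i) w \<in> R \<Longrightarrow> w \<in> R"
proof (induction i arbitrary: w)
  case 0 then show ?case by simp
next
  case (Suc i)
  have "(f ^^ i) (f w) \<in> R" using Suc.prems(2) by (simp add: fpow_swap)
  then have "f w \<in> R" using Suc.IH fin[OF Suc.prems(1)] by blast
  then show ?case using R_bwd Suc.prems(1) by blast
qed

lemma R_img: "f ` R = R"
proof
  show "f ` R \<subseteq> R" using R_fwd by blast
  show "R \<subseteq> f ` R"
  proof
    fix y assume y: "y \<in> R"
    then have "y \<in> f ` X" using RX surj by blast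
    then obtain x where "x \<in> X" "f x = y" by blast
    then show "y \<in> f ` R" using R_bwd y by blast
  qed
qed

definition g where "g y = (THE x. x \<in> X \<and> f x = y)"

lemma g_prop: assumes "y \<in> R" shows "g y \<in> X" "f (g y) = y"
proof -
  have "y \<in> f ` X" using assms RX surj by blast
  then obtain x where x: "x \<in> X" "f x = y" by blast
  have D: "y \<in> Dset" using assms RQ unfolding Q_def by blast
  have "\<exists>!x. x \<in> X \<and> f x = y"
    using x D_uniq[OF D] by blast
  then have "g y \<in> X \<and> f (g y) = y" unfolding g_def by (rule theI')
  then show "g y \<in> X" "f (g y) = y" by simp_all
qed

lemma g_R: "y \<in> R \<Longrightarrow> g y \<in> R"
  using g_prop R_bwd by metis

lemma g_f: assumes "x \<in> R" shows "g (f x) = x"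
proof -
  have fx: "f x \<in> R" using R_fwd assms by blast
  have D: "f x \<in> Dset" using fx RQ unfolding Q_def by blast
  have xX: "x \<in> X" using assms RX by blast
  show ?thesis unfolding g_def
  proof (rule the_equality)
    show "x \<in> X \<and> f x = f x" using xX by simp
    show "\<And>z. z \<in> X \<and> f z = f x \<Longrightarrow> z = x" using D_uniq[OF D] xX by blast
  qed
qed

lemma g_cont: "continuous_on R g"
  unfolding continuous_on_iff
proof (intro ballI allI impI)
  fix y e assume y: "y \<in> R" and e: "(0::real) < e"
  define K where "K = X \<inter> - ball (g y) e"
  have "compact K" unfolding K_def by (intro compact_Int_closed cpt) (simp add: open_ball closed_Compl)
  moreover have "continuous_on K f" by (rule continuous_on_subset[OF cont]) (simp add: K_def)
  ultimately have "compact (f ` K)" by (intro compact_continuous_image)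
  then have op: "open (- f ` K)" by (simp add: compact_imp_closed open_Compl)
  have "y \<notin> f ` K"
  proof
    assume "y \<in> f ` K"
    then obtain x where x: "x \<in> K" "f x = y" by blast
    have D: "y \<in> Dset" using y RQ unfolding Q_def by blast
    have "x = g y" using D_uniq[OF D, of x "g y"] x g_prop[OF y] unfolding K_def by blast
    then show False using x(1) e unfolding K_def by simp
  qed
  then obtain d where d: "d > 0" "ball y d \<subseteq> - f ` K"
    using op open_contains_ball by blast
  show "\<exists>d>0. \<forall>x'\<in>R. dist x' y < d \<longrightarrow> dist (g x') (g y) < e"
  proof (intro exI conjI ballI impI)
    show "d > 0" by (rule d(1))
    fix x' assume x': "x' \<in> R" "dist x' y < d"
    then have "x' \<notin> f ` K" using d(2) by (auto simp: dist_commute)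
    then have "g x' \<notin> K" using g_prop[OF x'(1)] by (metis imageI)
    then show "dist (g x') (g y) < e" using g_prop[OF x'(1)] unfolding K_def
      by (simp add: dist_commute)
  qed
qed

lemma homeo: "homeomorphism R R f g"
  unfolding homeomorphism_def
proof (intro conjI ballI)
  show "\<And>x. x \<in> R \<Longrightarrow> g (f x) = x" by (rule g_f)
  show "f ` R = R" by (rule R_img)
  show "continuous_on R f" by (rule continuous_on_subset[OF cont RX])
  show "\<And>y. y \<in> R \<Longrightarrow> f (g y) = y" using g_prop by blast
  show "g ` R = R"
  proof
    show "g ` R \<subseteq> R" using g_R by blast
    show "R \<subseteq> g ` R"
    proof
      fix x assume "x \<in> R"
      then have "x = g (f x)" "f x \<in> R" using g_f R_fwd by auto
      then show "x \<in> g ` R" by blast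
    qed
  qed
  show "continuous_on R g" by (rule g_cont)
qed

lemma min_f: "minimal_on R f"
  unfolding minimal_on_def
proof (intro conjI ballI)
  show "f ` R \<subseteq> R" using R_img by simp
  fix x assume x: "x \<in> R"
  have sub: "{(f ^^ n) x | n. True} \<subseteq> R" using R_fwd_pow x by blast
  have "X \<subseteq> closure {(f ^^ n) x | n. True}" using orbit_dense x RX by blast
  then show "top_of_set R closure_of {(f ^^ n) x | n. True} = R"
    using clo_sub[OF sub] RX by blast
qed

lemma gpow_R: "y \<in> R \<Longrightarrow> (g ^^ n) y \<in> R"
  by (induction n) (simp_all add: g_R)

lemma min_g: "minimal_on R g"
  unfolding minimal_on_def
proof (intro conjI ballI)
  show "g ` R \<subseteq> R" using g_R by blast
  fix x assume x: "x \<in> R"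
  have sub: "{(g ^^ n) x | n. True} \<subseteq> R" using gpow_R x by blast
  define T where "T k = closure {(g ^^ (n + k)) x | n. True}" for k
  have TX: "T k \<subseteq> X" for k unfolding T_def
    by (rule closure_minimal[OF _ closedX]) (use gpow_R x RX in blast)
  have Tcl: "closed (T k)" for k unfolding T_def by simp
  have Tne: "T k \<noteq> {}" for k unfolding T_def using closure_subset by fastforce
  have Tdec: "T (Suc k) \<subseteq> T k" for k unfolding T_def
  proof (rule closure_mono)
    show "{(g ^^ (n + Suc k)) x | n. True} \<subseteq> {(g ^^ (n + k)) x | n. True}"
    proof
      fix y assume "y \<in> {(g ^^ (n + Suc k)) x | n. True}"
      then obtain n where "y = (g ^^ (n + Suc k)) x" by blast
      then have "y = (g ^^ (Suc n + k)) x" by simp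
      then show "y \<in> {(g ^^ (n + k)) x | n. True}" by blast
    qed
  qed
  define A where "A = \<Inter>(range T)"
  obtain a where a: "a \<in> A" unfolding A_def using nest_nonempty[of X T, OF cpt Tcl TX Tne Tdec] by blast
  have Acl: "closed A" unfolding A_def using Tcl by blast
  have AX: "A \<subseteq> X" unfolding A_def using TX by blast
  have finv: "f ` A \<subseteq> A"
  proof -
    have "f ` T (Suc k) \<subseteq> T k" for k
    proof -
      let ?S = "{(g ^^ (n + Suc k)) x | n. True}"
      have "continuous_on (closure ?S) f"
        by (rule continuous_on_subset[OF cont]) (use TX[of "Suc k"] in \<open>simp add: T_def\<close>)
      moreover have "f ` ?S \<subseteq> T k"
      proof
        fix y assume "y \<in> f ` ?S"
        then obtain n where n: "y = f ((g ^^ (n + Suc k)) x)" by blast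
        have "(g ^^ (n + Suc k)) x = g ((g ^^ (n + k)) x)" by simp
        then have "y = (g ^^ (n + k)) x" using n g_prop(2)[OF gpow_R[OF x]] by simp
        then show "y \<in> T k" unfolding T_def using closure_subset by fastforce
      qed
      ultimately show ?thesis unfolding T_def[of "Suc k"]
        using image_closure_subset Tcl by blast
    qed
    then show ?thesis unfolding A_def by blast
  qed
  have "(f ^^ n) a \<in> A" for n by (induction n) (use a finv in auto)
  then have "{(f ^^ n) a | n. True} \<subseteq> A" by blast
  then have "closure {(f ^^ n) a | n. True} \<subseteq> A" using Acl by (rule closure_minimal)
  moreover have "X \<subseteq> closure {(f ^^ n) a | n. True}" using orbit_dense a AX by blast
  moreover have "A \<subseteq> closure {(g ^^ n) x | n. True}" unfolding A_def using T_def[of 0] by auto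
  ultimately have "X \<subseteq> closure {(g ^^ n) x | n. True}" by blast
  then show "top_of_set R closure_of {(g ^^ n) x | n. True} = R"
    using clo_sub[OF sub] RX by blast
qed

definition ch where "ch x0 n = (if 0 \<le> n then (f ^^ nat n) x0 else (g ^^ nat (- n)) x0)"

lemma ch_pos: "ch x0 (int k) = (f ^^ k) x0" unfolding ch_def by simp
lemma ch_neg: "ch x0 (- int k) = (g ^^ k) x0" unfolding ch_def by simp

lemma ch_cases: obtains k where "n = int k" | k where "n = - int (Suc k)"
  by (metis int_cases)

lemma ch_R: "x0 \<in> R \<Longrightarrow> ch x0 n \<in> R"
  by (cases n rule: ch_cases) (simp_all only: ch_pos ch_neg R_fwd_pow gpow_R)

lemma ch_step: assumes x0: "x0 \<in> R" shows "f (ch x0 n) = ch x0 (n + 1)"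
proof (cases n rule: ch_cases)
  case (1 k)
  have "ch x0 (n + 1) = ch x0 (int (Suc k))" using 1 by (simp add: add.commute)
  then show ?thesis using 1 by (simp only: ch_pos funpow.simps comp_def)
next
  case (2 k)
  have "ch x0 (n + 1) = ch x0 (- int k)" using 2 by simp
  also have "\<dots> = (g ^^ k) x0" by (rule ch_neg)
  also have "\<dots> = f (g ((g ^^ k) x0))" using g_prop(2)[OF gpow_R[OF x0]] by simp
  also have "g ((g ^^ k) x0) = ch x0 n" using 2 ch_neg[of x0 "Suc k"] by simp
  finally show ?thesis by simp
qed

lemma ch_fpow: "x0 \<in> R \<Longrightarrow> (f ^^ k) (ch x0 n) = ch x0 (n + int k)"
proof (induction k)
  case 0 then show ?case by simp
next
  case (Suc k)
  have "(f ^^ Suc k) (ch x0 n) = f (ch x0 (n + int k))" using Suc by simp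
  also have "\<dots> = ch x0 (n + int k + 1)" by (rule ch_step[OF Suc.prems])
  moreover have "n + int k + 1 = n + int (Suc k)" by simp
  ultimately show ?case by simp
qed

lemma ch_back: "x0 \<in> R \<Longrightarrow> z \<in> R \<Longrightarrow> (f ^^ i) z = ch x0 m \<Longrightarrow> z = ch x0 (m - int i)"
proof (induction i arbitrary: z)
  case 0 then show ?case by simp
next
  case (Suc i)
  have "(f ^^ i) (f z) = ch x0 m" using Suc.prems(3) by (simp add: fpow_swap)
  then have fz: "f z = ch x0 (m - int i)" using Suc.IH[OF Suc.prems(1) R_fwd[OF Suc.prems(2)]] by blast
  have "ch x0 (m - int i) = f (ch x0 (m - int (Suc i)))"
    using ch_step[OF Suc.prems(1), of "m - int (Suc i)"] by simp
  then have "g (f z) = ch x0 (m - int (Suc i))"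
    using fz g_f[OF ch_R[OF Suc.prems(1)]] by simp
  then show ?case using g_f[OF Suc.prems(2)] by simp
qed

lemma R_homeo_part: "R \<subseteq> homeo_part X f"
proof
  fix x0 assume x0: "x0 \<in> R"
  have x0X: "x0 \<in> X" using x0 RX by blast
  have "full_orbit X f x0 = range (ch x0)"
  proof
    show "full_orbit X f x0 \<subseteq> range (ch x0)"
    proof
      fix z assume "z \<in> full_orbit X f x0"
      then obtain i j where z: "z \<in> X" "(f ^^ i) z = (f ^^ j) x0" unfolding full_orbit_def by blast
      have "(f ^^ i) z \<in> R" using z(2) R_fwd_pow[OF x0] by simp
      then have zR: "z \<in> R" using R_bwd_pow z(1) by blast
      have "(f ^^ i) z = ch x0 (int j)" using z(2) ch_pos by simp
      then have "z = ch x0 (int j - int i)" by (rule ch_back[OF x0 zR])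
      then show "z \<in> range (ch x0)" by blast
    qed
    show "range (ch x0) \<subseteq> full_orbit X f x0"
    proof
      fix z assume "z \<in> range (ch x0)"
      then obtain n where zn: "z = ch x0 n" by blast
      have zX: "z \<in> X" using zn ch_R[OF x0] RX by blast
      show "z \<in> full_orbit X f x0"
      proof (cases n rule: ch_cases)
        case (1 k)
        then have "(f ^^ 0) z = (f ^^ k) x0" using zn ch_pos by simp
        then show ?thesis unfolding full_orbit_def using zX by blast
      next
        case (2 k)
        have "(f ^^ Suc k) z = ch x0 0" using zn 2 ch_fpow[OF x0, of "Suc k" n] by simp
        then have "(f ^^ Suc k) z = (f ^^ 0) x0" using ch_pos[of x0 0] by simp
        then show ?thesis unfolding full_orbit_def using zX by blast
      qed
    qed
  qed
  moreover have "ch x0 0 = x0" unfolding ch_def by simp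
  moreover have "\<forall>n. f (ch x0 n) = ch x0 (n + 1)" using ch_step[OF x0] by blast
  ultimately show "x0 \<in> homeo_part X f" unfolding homeo_part_def using x0X by blast
qed

end


theorem lemma5:
  fixes X :: "'a::metric_space set" and f :: "'a \<Rightarrow> 'a" and P :: "'a set"
  assumes "compact X"
    and "continuous_on X f" and "f ` X \<subseteq> X"
    and "minimal_on X f"
    and "P \<subseteq> X" and "residual_in X P"
  shows "\<exists>R. R \<subseteq> P \<inter> homeo_part X f \<and> residual_in X R
           \<and> f ` R = R \<and> R = {x\<in>X. f x \<in> R}
           \<and> (\<exists>g. homeomorphism R R f g \<and> minimal_on R f \<and> minimal_on R g)"
proof (cases "X = {}")
  case True
  have "residual_in X {}" unfolding residual_in_def using True by (intro exI[of _ "{}"]) simp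
  moreover have "homeomorphism {} {} f f" by (simp add: homeomorphism_def)
  moreover have "minimal_on {} f" by (simp add: minimal_on_def)
  ultimately show ?thesis by (intro exI[of _ "{}"]) auto
next
  case False
  interpret mini2 X f P
    using assms False by unfold_locales
  have "R \<subseteq> P" using RQ unfolding Q_def by blast
  then show ?thesis
    using R_homeo_part R_res R_img R_pre homeo min_f min_g by blast
qed

end
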